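(* Assume $\kappa=(\kappa_1,\dots,\kappa_n)\in\Gamma_k$ with $\kappa_1\ge\kappa_2\ge\dots\ge\kappa_n$. Then for any $0\le s\le k\le n$, $$\frac{\kappa_1^s\,\sigma_{k-s}(\kappa)}{\sigma_k(\kappa)}\ge\frac{C_n^{k-s}}{C_n^k},$$ where $C_n^m=\frac{n!}{m!(n-m)!}$.
   Context: $\sigma_m(\kappa)$ denotes the $m$-th elementary symmetric function of $\kappa\in\mathbb{R}^n$, with $\sigma_0=1$. $\Gamma_k=\{\kappa\in\mathbb{R}^n:\sigma_m(\kappa)>0,\ m=1,\dots,k\}$ (Gårding cone), $k\ge1$. *)

theory Defs
  imports Complex_Main
begin

text \<open>Vectors in R^n are represented as functions nat => real, with components
  kappa 0, ..., kappa (n-1) (i.e. kappa_i of the paper is kappa (i-1)).\<close>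

definition esym :: "nat \<Rightarrow> nat \<Rightarrow> (nat \<Rightarrow> real) \<Rightarrow> real" where
  "esym n m \<kappa> = (\<Sum>S\<in>{S. S \<subseteq> {..<n} \<and> card S = m}. \<Prod>i\<in>S. \<kappa> i)"

definition garding_cone :: "nat \<Rightarrow> nat \<Rightarrow> (nat \<Rightarrow> real) set" where
  "garding_cone n k = {\<kappa>. \<forall>m\<in>{1..k}. esym n m \<kappa> > 0}"

end

theory Submission
  imports Defs "HOL-Computational_Algebra.Polynomial" "HOL-Computational_Algebra.Fundamental_Theorem_Algebra"
begin

lemma esym_0 [simp]: "esym n 0 \<kappa> = 1"
proof -
  have "{S. S \<subseteq> {..<n} \<and> card S = 0} = {{}}"
  proof (rule set_eqI, rule iffI)
    fix S assume "S \<in> {S. S \<subseteq> {..<n} \<and> card S = 0}"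
    then have "finite S" "card S = 0" using finite_subset[of S "{..<n}"] by auto
    then show "S \<in> {{}}" by simp
  qed auto
  then show ?thesis by (simp add: esym_def)
qed

lemma esym_gt: "n < m \<Longrightarrow> esym n m \<kappa> = 0"
proof -
  assume "n < m"
  have "{S. S \<subseteq> {..<n} \<and> card S = m} = {}"
  proof (rule set_eqI, rule iffI)
    fix S assume "S \<in> {S. S \<subseteq> {..<n} \<and> card S = m}"
    then have "card S \<le> n" "card S = m" using card_mono[of "{..<n}" S] by auto
    then show "S \<in> {}" using \<open>n < m\<close> by simp
  qed auto
  then show ?thesis unfolding esym_def by (simp only: sum.empty)
qed

lemma esym_Suc: "esym (Suc n) (Suc m) \<kappa> = esym n (Suc m) \<kappa> + \<kappa> n * esym n m \<kappa>"
proof -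
  let ?A = "{S. S \<subseteq> {..<n} \<and> card S = Suc m}"
  let ?T = "{S. S \<subseteq> {..<n} \<and> card S = m}"
  let ?B = "insert n ` ?T"
  have eq: "{S. S \<subseteq> {..<Suc n} \<and> card S = Suc m} = ?A \<union> ?B"
  proof (rule set_eqI, rule iffI)
    fix S assume S: "S \<in> {S. S \<subseteq> {..<Suc n} \<and> card S = Suc m}"
    show "S \<in> ?A \<union> ?B"
    proof (cases "n \<in> S")
      case True
      have "S - {n} \<in> ?T" using S True finite_subset[of S "{..<Suc n}"]
        by (auto simp: card_Diff_singleton)
      moreover have "S = insert n (S - {n})" using True by auto
      ultimately show ?thesis by blast
    next
      case False
      then have "S \<subseteq> {..<n}" using S by (auto simp: less_Suc_eq)
      then show ?thesis using S by auto
    qed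
  next
    fix S assume "S \<in> ?A \<union> ?B"
    then show "S \<in> {S. S \<subseteq> {..<Suc n} \<and> card S = Suc m}"
    proof
      assume "S \<in> ?A" then show ?thesis by auto
    next
      assume "S \<in> ?B"
      then obtain T where T: "T \<in> ?T" "S = insert n T" by blast
      have "finite T" using T(1) finite_subset by blast
      moreover have "n \<notin> T" using T(1) by auto
      ultimately show ?thesis using T by auto
    qed
  qed
  have fin: "finite ?A" "finite ?B"
  proof -
    have "?A \<subseteq> Pow {..<n}" "?T \<subseteq> Pow {..<n}" by blast+
    then have "finite ?A" "finite ?T" by (auto intro: finite_subset)
    then show "finite ?A" "finite ?B" by auto
  qed
  have disj: "?A \<inter> ?B = {}" by auto
  have inj: "inj_on (insert n) ?T"
  proof (rule inj_onI)
    fix X Y assume "X \<in> ?T" "Y \<in> ?T" "insert n X = insert n Y"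
    then have "n \<notin> X" "n \<notin> Y" by auto
    then show "X = Y" using \<open>insert n X = insert n Y\<close> by (metis Diff_insert_absorb)
  qed
  have "(\<Sum>S\<in>?B. \<Prod>i\<in>S. \<kappa> i) = (\<Sum>T\<in>?T. \<Prod>i\<in>insert n T. \<kappa> i)"
    by (rule sum.reindex[OF inj, unfolded comp_def])
  also have "\<dots> = (\<Sum>T\<in>?T. \<kappa> n * (\<Prod>i\<in>T. \<kappa> i))"
  proof (rule sum.cong[OF refl])
    fix T assume T: "T \<in> ?T"
    have "finite T" using T finite_subset by blast
    moreover have "n \<notin> T" using T by auto
    ultimately show "(\<Prod>i\<in>insert n T. \<kappa> i) = \<kappa> n * (\<Prod>i\<in>T. \<kappa> i)" by simp
  qed
  also have "\<dots> = \<kappa> n * esym n m \<kappa>" by (simp add: esym_def sum_distrib_left)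
  finally have B: "(\<Sum>S\<in>?B. \<Prod>i\<in>S. \<kappa> i) = \<kappa> n * esym n m \<kappa>" .
  have "esym (Suc n) (Suc m) \<kappa> = (\<Sum>S\<in>?A \<union> ?B. \<Prod>i\<in>S. \<kappa> i)"
    unfolding esym_def eq by (rule refl)
  also have "\<dots> = (\<Sum>S\<in>?A. \<Prod>i\<in>S. \<kappa> i) + (\<Sum>S\<in>?B. \<Prod>i\<in>S. \<kappa> i)"
    by (rule sum.union_disjoint[OF fin disj])
  also have "\<dots> = esym n (Suc m) \<kappa> + \<kappa> n * esym n m \<kappa>"
    unfolding B by (simp only: esym_def)
  finally show ?thesis .
qed

lemma esym_1: "esym n 1 \<kappa> = (\<Sum>i<n. \<kappa> i)"
proof (induction n)
  case 0
  then show ?case by (simp add: esym_gt)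
next
  case (Suc n)
  then show ?case using esym_Suc[of n 0 \<kappa>] by simp
qed


definition rr :: "complex poly \<Rightarrow> bool" where
  "rr p \<longleftrightarrow> p = 0 \<or> (\<forall>z. poly p z = 0 \<longrightarrow> Im z = 0)"

lemma Im_inverse_real: "Im (inverse w) = - Im w / (Re w ^ 2 + Im w ^ 2)"
  by (simp add: power2_eq_square)

lemma logderiv:
  fixes p :: "complex poly"
  assumes "p \<noteq> 0" "\<forall>z. poly p z = 0 \<longrightarrow> Im z = 0" "poly p z \<noteq> 0"
  shows "\<exists>w\<ge>0. Im (poly (pderiv p) z / poly p z) = - Im z * w \<and> (0 < degree p \<longrightarrow> w > 0)"
  using assms
proof (induction "degree p" arbitrary: p rule: less_induct)
  case less
  show ?case
  proof (cases "degree p = 0")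
    case True
    then obtain c where "p = [:c:]" by (metis degree_eq_zeroE)
    then have "pderiv p = 0" by simp
    then show ?thesis using True by (intro exI[of _ 0]) simp
  next
    case False
    then have "\<not> constant (poly p)" by (simp add: constant_degree)
    then obtain r where r: "poly p r = 0" using fundamental_theorem_of_algebra by blast
    then have Imr: "Im r = 0" using less.prems by blast
    from r obtain q where pq: "p = [:-r,1:] * q" using poly_eq_0_iff_dvd by (metis dvdE)
    have q0: "q \<noteq> 0" using pq less.prems by auto
    have "degree ([:-r,1:] * q) = degree [:-r,1:] + degree q"
      using q0 by (intro degree_mult_eq) auto
    then have dq: "degree q < degree p" using pq by simp
    have qroots: "\<forall>z. poly q z = 0 \<longrightarrow> Im z = 0" using less.prems(2) pq by auto
    have qz: "poly q z \<noteq> 0" using less.prems(3) pq by auto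
    have zr: "z - r \<noteq> 0" using less.prems(3) pq by auto
    obtain w where w: "w \<ge> 0" "Im (poly (pderiv q) z / poly q z) = - Im z * w"
      using less.hyps[OF dq q0 qroots qz] by blast
    have d1: "pderiv [:-r,1:] = (1::complex poly)" by (simp add: pderiv_pCons)
    have dp: "pderiv p = q + [:-r,1:] * pderiv q"
      unfolding pq pderiv_mult d1 by (simp only: mult_1_right add.commute)
    have pz: "poly p z = (z - r) * poly q z" by (simp add: pq algebra_simps)
    have pdz: "poly (pderiv p) z = poly q z + (z - r) * poly (pderiv q) z" by (simp add: dp algebra_simps)
    have "poly (pderiv p) z / poly p z = inverse (z - r) + poly (pderiv q) z / poly q z"
      unfolding pz pdz using zr qz by (simp add: field_simps)
    then have "Im (poly (pderiv p) z / poly p z) = Im (inverse (z - r)) + Im (poly (pderiv q) z / poly q z)"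
      by simp
    also have "\<dots> = - Im (z - r) / (Re (z-r) ^ 2 + Im (z-r) ^ 2) + - Im z * w"
      by (simp only: Im_inverse_real w(2))
    also have "Im (z - r) = Im z" using Imr by simp
    finally have "Im (poly (pderiv p) z / poly p z) = - Im z * (w + 1 / (Re (z-r) ^ 2 + Im (z-r) ^ 2))"
      using Imr by (simp add: distrib_left)
    moreover have pos: "Re (z-r) ^ 2 + Im (z-r) ^ 2 > 0"
    proof -
      have "Re (z-r) \<noteq> 0 \<or> Im (z-r) \<noteq> 0" using zr complex_eq_iff[of "z-r" 0] by auto
      then show ?thesis by (simp only: sum_power2_gt_zero_iff)
    qed
    moreover have "w + 1 / (Re (z-r) ^ 2 + Im (z-r) ^ 2) > 0"
    proof -
      have "1 / (Re (z-r) ^ 2 + Im (z-r) ^ 2) > 0" using pos by (rule divide_pos_pos[OF zero_less_one])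
      then show ?thesis using w(1) by linarith
    qed
    ultimately show ?thesis
      by (intro exI[of _ "w + 1 / (Re (z-r) ^ 2 + Im (z-r) ^ 2)"] conjI impI) simp_all
  qed
qed

lemma rr_pderiv: "rr p \<Longrightarrow> rr (pderiv p)"
proof -
  assume "rr p"
  show "rr (pderiv p)"
  proof (cases "p = 0 \<or> degree p = 0")
    case True
    then have "pderiv p = 0"
    proof (cases "p = 0")
      case True then show ?thesis by simp
    next
      case False then have "degree p = 0" using \<open>p = 0 \<or> degree p = 0\<close> by blast
      then show ?thesis by (simp only: pderiv_eq_0_iff)
    qed
    then show ?thesis by (simp add: rr_def)
  next
    case False
    then have p0: "p \<noteq> 0" and dpos: "0 < degree p" by auto
    then have roots: "\<forall>z. poly p z = 0 \<longrightarrow> Im z = 0" using \<open>rr p\<close> unfolding rr_def by blast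
    have "Im z = 0" if "poly (pderiv p) z = 0" for z
    proof (cases "poly p z = 0")
      case True then show ?thesis using roots by blast
    next
      case False
      from logderiv[OF p0 roots False] obtain w where
        w: "Im (poly (pderiv p) z / poly p z) = - Im z * w" "0 < degree p \<longrightarrow> w > 0"
        by (elim exE conjE)
      have "w > 0" using w(2) dpos by blast
      have "- Im z * w = 0" using w(1) that by simp
      then show ?thesis using \<open>w > 0\<close> by simp
    qed
    then show ?thesis unfolding rr_def by blast
  qed
qed

lemma rr_higher_pderiv: "rr p \<Longrightarrow> rr ((pderiv ^^ m) p)"
  by (induction m) (auto intro: rr_pderiv)

lemma rr_reflect: "rr p \<Longrightarrow> rr (reflect_poly p)"
proof -
  assume "rr p"
  show ?thesis
  proof (cases "p = 0")
    case True then show ?thesis by (simp add: rr_def)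
  next
    case False
    have "Im z = 0" if "poly (reflect_poly p) z = 0" for z
    proof (cases "z = 0")
      case True then show ?thesis by simp
    next
      case False
      then have "poly p (inverse z) = 0" using that by (simp add: poly_reflect_poly_nz)
      then have "Im (inverse z) = 0" using \<open>rr p\<close> \<open>p \<noteq> 0\<close> by (auto simp: rr_def)
      then show ?thesis using False by (auto simp: Im_inverse_real divide_eq_0_iff)
    qed
    then show ?thesis by (simp add: rr_def)
  qed
qed

lemma rr_quadratic:
  assumes "rr [:complex_of_real c, complex_of_real b, complex_of_real a:]"
  shows "4 * a * c \<le> b ^ 2"
proof (rule ccontr)
  assume "\<not> 4 * a * c \<le> b ^ 2"
  then have lt: "b ^ 2 < 4 * a * c" by simp
  then have a0: "a \<noteq> 0" by auto
  define d where "d = sqrt (4 * a * c - b ^ 2)"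
  have d0: "d > 0" using lt by (simp add: d_def)
  have dd: "d * d = 4 * a * c - b ^ 2" using lt by (simp add: d_def)
  define z where "z = Complex (- b / (2 * a)) (d / (2 * a))"
  have Imz: "Im z \<noteq> 0" using a0 d0 by (simp add: z_def)
  have re0: "a * ((- b / (2 * a))^2 - (d / (2 * a))^2) + b * (- b / (2 * a)) + c = 0"
  proof -
    have "a * ((- b / (2 * a))^2 - (d / (2 * a))^2) + b * (- b / (2 * a)) + c
        = (4 * a * c - b * b - d * d) / (4 * a)"
      using a0 by (simp add: field_simps power2_eq_square)
    also have "\<dots> = 0" using dd by (simp add: power2_eq_square)
    finally show ?thesis .
  qed
  have im0: "2 * a * (- b / (2 * a)) * (d / (2 * a)) + b * (d / (2 * a)) = 0"
    using a0 by (simp add: field_simps)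
  have "poly [:complex_of_real c, complex_of_real b, complex_of_real a:] z = of_real c + z * (of_real b + z * of_real a)" by simp
  also have "\<dots> = Complex (a * ((- b / (2 * a))^2 - (d / (2 * a))^2) + b * (- b / (2 * a)) + c)
      (2 * a * (- b / (2 * a)) * (d / (2 * a)) + b * (d / (2 * a)))"
    by (simp add: z_def complex_eq_iff power2_eq_square algebra_simps)
  also have "\<dots> = 0" unfolding re0 im0 by (simp add: complex_eq_iff)
  finally have "poly [:complex_of_real c, complex_of_real b, complex_of_real a:] z = 0" .
  moreover have "[:complex_of_real c, complex_of_real b, complex_of_real a:] \<noteq> 0" using a0 by simp
  ultimately show False using assms Imz by (auto simp: rr_def)
qed


definition Pp :: "nat \<Rightarrow> (nat \<Rightarrow> real) \<Rightarrow> complex poly" where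
  "Pp n \<kappa> = (\<Prod>i<n. [:complex_of_real (\<kappa> i), 1:])"

lemma Pp_Suc: "Pp (Suc n) \<kappa> = Pp n \<kappa> * [:complex_of_real (\<kappa> n), 1:]"
  by (simp add: Pp_def)

lemma coeff_Pp: "coeff (Pp n \<kappa>) m = (if m \<le> n then complex_of_real (esym n (n - m) \<kappa>) else 0)"
proof (induction n arbitrary: m)
  case 0
  then show ?case by (simp add: Pp_def)
next
  case (Suc n)
  have c: "coeff (Pp (Suc n) \<kappa>) m = of_real (\<kappa> n) * coeff (Pp n \<kappa>) m
      + (if m = 0 then 0 else coeff (Pp n \<kappa>) (m - 1))"
    by (cases m) (simp_all add: Pp_Suc)
  show ?case
  proof (cases m)
    case 0
    then show ?thesis using c Suc.IH[of 0] esym_Suc[of n n \<kappa>] esym_gt[of n "Suc n" \<kappa>] by simp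
  next
    case (Suc m')
    show ?thesis
    proof (cases "m' < n")
      case True
      have e: "esym (Suc n) (n - m') \<kappa> = esym n (n - m') \<kappa> + \<kappa> n * esym n (n - Suc m') \<kappa>"
        using esym_Suc[of n "n - Suc m'" \<kappa>] True by (simp add: Suc_diff_Suc)
      show ?thesis using c Suc.IH[of m] Suc.IH[of m'] True \<open>m = Suc m'\<close> e by simp
    next
      case False
      show ?thesis
      proof (cases "m' = n")
        case True
        then show ?thesis using c Suc.IH[of m] Suc.IH[of m'] \<open>m = Suc m'\<close> by simp
      next
        case False
        then show ?thesis using c Suc.IH[of m] Suc.IH[of m'] \<open>m = Suc m'\<close> \<open>\<not> m' < n\<close> by simp
      qed
    qed
  qed
qed

lemma rr_Pp: "rr (Pp n \<kappa>)"
  unfolding rr_def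
proof (intro disjI2 allI impI)
  fix z assume "poly (Pp n \<kappa>) z = 0"
  then have "\<exists>i\<in>{..<n}. complex_of_real (\<kappa> i) + z = 0"
    by (simp add: Pp_def poly_prod prod_zero_iff)
  then obtain i where "z = - complex_of_real (\<kappa> i)" by (metis add.commute add_eq_0_iff)
  then show "Im z = 0" by simp
qed

lemma coeff_hp: "coeff ((pderiv ^^ m) (p :: complex poly)) i = of_nat (pochhammer (Suc i) m) * coeff p (i + m)"
  by (simp only: coeff_higher_pderiv pochhammer_of_nat)

lemma poch_fact: "pochhammer (Suc i) m * fact i = (fact (i + m) :: nat)"
proof (induction m)
  case 0 then show ?case by simp
next
  case (Suc m)
  have "pochhammer (Suc i) (Suc m) * fact i = (pochhammer (Suc i) m * fact i) * (Suc i + m)"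
    by (simp add: pochhammer_Suc algebra_simps)
  also have "\<dots> = fact (i + Suc m)" using Suc by (simp add: algebra_simps)
  finally show ?case .
qed

lemma poch_pos: "pochhammer (Suc i) m > (0::nat)"
  using poch_fact[of i m] by (metis fact_gt_zero mult_eq_0_iff neq0_conv fact_nonzero)


lemma newton_raw:
  assumes k1: "1 \<le> k" and kn: "k < n"
  shows "4 * (real (pochhammer 3 (k-1) * pochhammer 1 (n-k-1)) * esym n (k+1) \<kappa>)
           * (real (pochhammer 1 (k-1) * pochhammer 3 (n-k-1)) * esym n (k-1) \<kappa>)
         \<le> (real (pochhammer 2 (k-1) * pochhammer 2 (n-k-1)) * esym n k \<kappa>) ^ 2"
proof -
  define E where "E = (pderiv ^^ (n-k-1)) (Pp n \<kappa>)"
  define F where "F = reflect_poly E"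
  define G where "G = (pderiv ^^ (k-1)) F"
  have cE: "coeff E i = (if i \<le> k + 1 then of_nat (pochhammer (Suc i) (n-k-1)) * complex_of_real (esym n (k + 1 - i) \<kappa>) else 0)" for i
  proof (cases "i \<le> k + 1")
    case True
    then have "i + (n-k-1) \<le> n" "n - (i + (n-k-1)) = k + 1 - i" using kn by auto
    then show ?thesis using True by (simp add: E_def coeff_hp coeff_Pp)
  next
    case False
    then have "\<not> i + (n-k-1) \<le> n" using kn by auto
    then show ?thesis using False by (simp add: E_def coeff_hp coeff_Pp)
  qed
  have "degree E = k + 1"
  proof (rule antisym)
    show "degree E \<le> k + 1" by (rule degree_le) (simp add: cE)
    have "coeff E (k+1) \<noteq> 0" using poch_pos[of "k+1" "n-k-1"] by (simp add: cE)
    then show "k + 1 \<le> degree E" by (rule le_degree)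
  qed
  then have cF: "coeff F i = (if i > k + 1 then 0 else coeff E (k + 1 - i))" for i
    by (simp add: F_def coeff_reflect_poly)
  have cG: "coeff G i = of_nat (pochhammer (Suc i) (k-1)) * coeff F (i + (k-1))" for i
    by (simp add: G_def coeff_hp)
  define g0 where "g0 = real (pochhammer 1 (k-1) * pochhammer 3 (n-k-1)) * esym n (k-1) \<kappa>"
  define g1 where "g1 = real (pochhammer 2 (k-1) * pochhammer 2 (n-k-1)) * esym n k \<kappa>"
  define g2 where "g2 = real (pochhammer 3 (k-1) * pochhammer 1 (n-k-1)) * esym n (k+1) \<kappa>"
  have "G = [:complex_of_real g0, complex_of_real g1, complex_of_real g2:]"
  proof (rule poly_eqI)
    fix i
    show "coeff G i = coeff [:complex_of_real g0, complex_of_real g1, complex_of_real g2:] i"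
    proof (cases "i \<le> 2")
      case True
      then consider "i = 0" | "i = 1" | "i = 2" by linarith
      then show ?thesis
      proof cases
        case 1
        have "k + 1 - (0 + (k - 1)) = 2" "k + 1 - 2 = k - 1" using k1 by auto
        then show ?thesis using 1 k1 by (simp add: cG cF cE g0_def numeral_2_eq_2 numeral_3_eq_3)
      next
        case 2
        have "k + 1 - (1 + (k - 1)) = 1" "k + 1 - 1 = k" "\<not> k + 1 < 1 + (k - 1)" using k1 by auto
        then show ?thesis using 2 k1 by (simp add: cG cF cE g1_def numeral_2_eq_2 numeral_3_eq_3)
      next
        case 3
        have "k + 1 - (2 + (k - 1)) = 0" "\<not> k + 1 < 2 + (k - 1)" using k1 by auto
        then show ?thesis using 3 k1 by (simp add: cG cF cE g2_def numeral_2_eq_2 numeral_3_eq_3)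
      qed
    next
      case False
      then have "i + (k - 1) > k + 1" using k1 by auto
      then show ?thesis using False by (simp add: cG cF coeff_pCons split: nat.split)
    qed
  qed
  moreover have "rr G" unfolding G_def F_def E_def
    by (intro rr_higher_pderiv rr_reflect rr_Pp)
  ultimately have "4 * g2 * g0 \<le> g1 ^ 2" using rr_quadratic by simp
  then show ?thesis by (simp add: g0_def g1_def g2_def mult.assoc)
qed


definition TT :: "nat \<Rightarrow> (nat \<Rightarrow> real) \<Rightarrow> nat \<Rightarrow> real" where
  "TT n \<kappa> j = esym n j \<kappa> * fact j * fact (n - j)"

lemma newton:
  assumes k1: "1 \<le> k" and kn: "k < n"
  shows "TT n \<kappa> (k-1) * TT n \<kappa> (k+1) \<le> TT n \<kappa> k ^ 2"
proof -
  have e1: "pochhammer 1 (k-1) = (fact (k-1) :: nat)" using poch_fact[of 0 "k-1"] by simp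
  have e2: "pochhammer 3 (n-k-1) * 2 = (fact (n-(k-1)) :: nat)"
  proof -
    have "n - (k-1) = 2 + (n-k-1)" using k1 kn by auto
    then show ?thesis using poch_fact[of 2 "n-k-1"] by (simp add: numeral_3_eq_3 numeral_2_eq_2)
  qed
  have e3: "pochhammer 2 (k-1) = (fact k :: nat)"
  proof -
    have "k = 1 + (k-1)" using k1 by auto
    then show ?thesis using poch_fact[of 1 "k-1"] by (simp add: numeral_2_eq_2)
  qed
  have e4: "pochhammer 2 (n-k-1) = (fact (n-k) :: nat)"
  proof -
    have "n-k = 1 + (n-k-1)" using kn by auto
    then show ?thesis using poch_fact[of 1 "n-k-1"] by (simp add: numeral_2_eq_2)
  qed
  have e5: "pochhammer 3 (k-1) * 2 = (fact (k+1) :: nat)"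
  proof -
    have "k + 1 = 2 + (k-1)" using k1 by auto
    then show ?thesis using poch_fact[of 2 "k-1"] by (simp add: numeral_3_eq_3 numeral_2_eq_2)
  qed
  have e6: "pochhammer 1 (n-k-1) = (fact (n-(k+1)) :: nat)" using poch_fact[of 0 "n-k-1"] by simp
  define a1 where "a1 = real (pochhammer 1 (k-1))"
  define a2 where "a2 = real (pochhammer 3 (n-k-1))"
  define a3 where "a3 = real (pochhammer 2 (k-1))"
  define a4 where "a4 = real (pochhammer 2 (n-k-1))"
  define a5 where "a5 = real (pochhammer 3 (k-1))"
  define a6 where "a6 = real (pochhammer 1 (n-k-1))"
  have r1: "fact (k-1) = a1" unfolding a1_def e1 by simp
  have r2: "fact (n-(k-1)) = a2 * 2" unfolding a2_def by (metis e2 of_nat_fact of_nat_mult of_nat_numeral)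
  have r3: "fact k = a3" unfolding a3_def e3 by simp
  have r4: "fact (n-k) = a4" unfolding a4_def e4 by simp
  have r5: "fact (k+1) = a5 * 2" unfolding a5_def by (metis e5 of_nat_fact of_nat_mult of_nat_numeral)
  have r6: "fact (n-(k+1)) = a6" unfolding a6_def e6 by simp
  have q: "4 * (a5 * a6 * esym n (k+1) \<kappa>) * (a1 * a2 * esym n (k-1) \<kappa>) \<le> (a3 * a4 * esym n k \<kappa>) ^ 2"
    using newton_raw[OF k1 kn, of \<kappa>] unfolding a1_def a2_def a3_def a4_def a5_def a6_def by simp
  have "TT n \<kappa> (k-1) * TT n \<kappa> (k+1) = 4 * (a5 * a6 * esym n (k+1) \<kappa>) * (a1 * a2 * esym n (k-1) \<kappa>)"
    unfolding TT_def r1 r2 r5 r6 by (simp add: algebra_simps)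
  also have "\<dots> \<le> (a3 * a4 * esym n k \<kappa>) ^ 2" by (rule q)
  also have "\<dots> = TT n \<kappa> k ^ 2" unfolding TT_def r3 r4 by (simp add: algebra_simps)
  finally show ?thesis .
qed


theorem lemma2p3:
  fixes n k s :: nat and \<kappa> :: "nat \<Rightarrow> real"
  assumes "1 \<le> k" and "s \<le> k" and "k \<le> n"
    and "\<kappa> \<in> garding_cone n k"
    and "\<And>i j. i \<le> j \<Longrightarrow> j < n \<Longrightarrow> \<kappa> j \<le> \<kappa> i"
  shows "\<kappa> 0 ^ s * esym n (k - s) \<kappa> / esym n k \<kappa>
           \<ge> real (n choose (k - s)) / real (n choose k)"
proof -
  note k1 = assms(1) and sk = assms(2) and kn = assms(3)
  have spos: "esym n j \<kappa> > 0" if "j \<le> k" for j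
  proof (cases "j = 0")
    case True then show ?thesis by simp
  next
    case False then show ?thesis using assms(4) that unfolding garding_cone_def by auto
  qed
  define T where "T = TT n \<kappa>"
  have Tpos: "T j > 0" if "j \<le> k" for j
    using spos[OF that] unfolding T_def TT_def by simp
  define r where "r = T 1 / T 0"
  have n1: "n \<ge> 1" using k1 kn by simp
  have T0: "T 0 = fact n" unfolding T_def TT_def by simp
  have T1: "T 1 = esym n 1 \<kappa> * fact (n - 1)" unfolding T_def TT_def by simp
  have fn: "(fact n :: real) = real n * fact (n - 1)"
    using n1 by (intro fact_reduce) simp
  have r_eq: "r = esym n 1 \<kappa> / real n"
    unfolding r_def T0 T1 fn using n1 by (simp add: field_simps)
  have "esym n 1 \<kappa> \<le> real n * \<kappa> 0"
  proof -
    have "esym n 1 \<kappa> = (\<Sum>i<n. \<kappa> i)" by (rule esym_1)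
    also have "\<dots> \<le> (\<Sum>i<n. \<kappa> 0)" by (rule sum_mono) (use assms(5) in auto)
    finally show ?thesis by simp
  qed
  then have r_le: "r \<le> \<kappa> 0" unfolding r_eq using n1 by (simp add: divide_le_eq mult.commute)
  have r_pos: "r > 0" unfolding r_def using Tpos[of 0] Tpos[of 1] k1 by simp
  have A: "T j \<le> r * T (j - 1)" if "1 \<le> j" "j \<le> k" for j
    using that
  proof (induction j)
    case 0 then show ?case by simp
  next
    case (Suc j)
    show ?case
    proof (cases "j = 0")
      case True then show ?thesis unfolding r_def using Tpos[of 0] by simp
    next
      case False
      then have IH: "T j \<le> r * T (j - 1)" using Suc by simp
      have nw: "T (j-1) * T (j+1) \<le> T j ^ 2"
        unfolding T_def using newton[of j n \<kappa>] False Suc.prems kn by simp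
      have pj: "T j > 0" "T (j - 1) > 0" using Tpos Suc.prems by auto
      have "T (j-1) * T (j+1) \<le> T (j-1) * (r * T j)"
      proof -
        have "T j ^ 2 = T j * T j" by (simp add: power2_eq_square)
        also have "\<dots> \<le> T j * (r * T (j - 1))" using IH pj by (simp add: mult_left_mono)
        finally show ?thesis using nw by (simp add: algebra_simps)
      qed
      then have "T (j+1) \<le> r * T j" using pj(2) by (simp add: mult_le_cancel_left_pos)
      then show ?thesis by simp
    qed
  qed
  have B: "T k \<le> r ^ t * T (k - t)" if "t \<le> s" for t
    using that
  proof (induction t)
    case 0 then show ?case by simp
  next
    case (Suc t)
    then have IH: "T k \<le> r ^ t * T (k - t)" by simp
    have "T (k - t) \<le> r * T (k - t - 1)" using A[of "k - t"] Suc.prems sk by simp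
    then have "r ^ t * T (k - t) \<le> r ^ t * (r * T (k - t - 1))"
      using r_pos by (simp add: mult_left_mono)
    then show ?case using IH by (simp add: algebra_simps)
  qed
  have key: "T k \<le> \<kappa> 0 ^ s * T (k - s)"
  proof -
    have "T k \<le> r ^ s * T (k - s)" using B by simp
    also have "\<dots> \<le> \<kappa> 0 ^ s * T (k - s)"
      using Tpos[of "k - s"] r_pos r_le by (simp add: mult_right_mono power_mono)
    finally show ?thesis .
  qed
  have C: "real (n choose j) = fact n * esym n j \<kappa> / T j" if "j \<le> k" for j
  proof -
    have "real (n choose j) = fact n / (fact j * fact (n - j))"
      using that kn by (simp add: binomial_fact)
    then show ?thesis using spos[OF that] unfolding T_def TT_def by (simp add: field_simps)
  qed
  have sks: "esym n (k - s) \<kappa> > 0" "esym n k \<kappa> > 0" using spos by auto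
  have Tks: "T (k - s) > 0" "T k > 0" using Tpos by auto
  have "real (n choose (k - s)) / real (n choose k)
      = (esym n (k - s) \<kappa> / esym n k \<kappa>) * (T k / T (k - s))"
    unfolding C[of "k - s", simplified] C[of k, simplified] using sks Tks by (simp add: field_simps)
  also have "\<dots> \<le> (esym n (k - s) \<kappa> / esym n k \<kappa>) * \<kappa> 0 ^ s"
    using key Tks sks by (intro mult_left_mono) (simp_all add: divide_le_eq)
  also have "\<dots> = \<kappa> 0 ^ s * esym n (k - s) \<kappa> / esym n k \<kappa>" by simp
  finally show ?thesis by simp
qed

end
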